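(* Let $k\ge 2$, let $H$ be a digraph (possibly with loops), and let $D$ be an $H$-colored local tournament. If every directed cycle in $D$ has $H$-length at most $k-2$, then $D$ has a $(k,H)$-kernel.
   Context: All digraphs are finite. A local tournament is a digraph $D$ such that for every vertex $x$, both the subdigraph induced by the in-neighbourhood $N^-(x)$ and that induced by the out-neighbourhood $N^+(x)$ are tournaments (every two distinct vertices joined by exactly one arc). $D$ has no loops and comes with a map $\rho: A(D)\to V(H)$. For a walk $W=(x_0,\ldots,x_n)$ in $D$, there is an obstruction on $x_i$ if $(\rho(x_{i-1},x_i),\rho(x_i,x_{i+1})) \notin A(H)$; for an open walk this is considered at internal vertices $x_i$, $1\le i\le n-1$, for a closed walk (such as a cycle) at all $i\in\{0,\ldots,n-1\}$ with indices modulo $n$. $O_H(W)$ is the set of indices with an obstruction; the $H$-length is $l_H(W)=|O_H(W)|+1$ for open $W$ and $|O_H(W)|$ for closed $W$. A $(k,H)$-kernel ($k\ge2$) is a set $S\subseteq V(D)$ such that for every two distinct $u,v\in S$ every directed $uv$-path in $D$ has $H$-length at least $k$, and for every $x\in V(D)\setminus S$ there is a directed path from $x$ to a vertex of $S$ of $H$-length at most $k-1$. *)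

theory Defs
  imports Main
begin

definition digraph :: "'a set \<Rightarrow> ('a \<times> 'a) set \<Rightarrow> bool" where
  "digraph V A \<longleftrightarrow> finite V \<and> A \<subseteq> V \<times> V"

definition loopless :: "('a \<times> 'a) set \<Rightarrow> bool" where
  "loopless A \<longleftrightarrow> (\<forall>x. (x, x) \<notin> A)"

definition is_tournament_on :: "'a set \<Rightarrow> ('a \<times> 'a) set \<Rightarrow> bool" where
  "is_tournament_on X A \<longleftrightarrow>
     (\<forall>u\<in>X. \<forall>v\<in>X. u \<noteq> v \<longrightarrow> ((u, v) \<in> A \<longleftrightarrow> (v, u) \<notin> A))"

definition in_nbhd :: "('a \<times> 'a) set \<Rightarrow> 'a \<Rightarrow> 'a set" where
  "in_nbhd A x = {y. (y, x) \<in> A}"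

definition out_nbhd :: "('a \<times> 'a) set \<Rightarrow> 'a \<Rightarrow> 'a set" where
  "out_nbhd A x = {y. (x, y) \<in> A}"

definition local_tournament :: "'a set \<Rightarrow> ('a \<times> 'a) set \<Rightarrow> bool" where
  "local_tournament V A \<longleftrightarrow> digraph V A \<and> loopless A \<and>
     (\<forall>x\<in>V. is_tournament_on (in_nbhd A x) A \<and> is_tournament_on (out_nbhd A x) A)"

definition H_colored :: "('a \<times> 'a) set \<Rightarrow> 'c set \<Rightarrow> ('c \<times> 'c) set \<Rightarrow> ('a \<times> 'a \<Rightarrow> 'c) \<Rightarrow> bool" where
  "H_colored A VH AH rho \<longleftrightarrow> digraph VH AH \<and> (\<forall>e\<in>A. rho e \<in> VH)"

definition dpath :: "'a set \<Rightarrow> ('a \<times> 'a) set \<Rightarrow> 'a list \<Rightarrow> bool" where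
  "dpath V A xs \<longleftrightarrow> xs \<noteq> [] \<and> distinct xs \<and> set xs \<subseteq> V \<and>
     (\<forall>i. Suc i < length xs \<longrightarrow> (xs ! i, xs ! Suc i) \<in> A)"

definition dcycle :: "'a set \<Rightarrow> ('a \<times> 'a) set \<Rightarrow> 'a list \<Rightarrow> bool" where
  "dcycle V A xs \<longleftrightarrow> length xs \<ge> 2 \<and> distinct xs \<and> set xs \<subseteq> V \<and>
     (\<forall>i<length xs. (xs ! i, xs ! ((i + 1) mod length xs)) \<in> A)"

definition obstr_open :: "('c \<times> 'c) set \<Rightarrow> ('a \<times> 'a \<Rightarrow> 'c) \<Rightarrow> 'a list \<Rightarrow> nat set" where
  "obstr_open AH rho xs = {i. 1 \<le> i \<and> Suc i < length xs \<and>
     (rho (xs ! (i - 1), xs ! i), rho (xs ! i, xs ! Suc i)) \<notin> AH}"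

definition H_length_open :: "('c \<times> 'c) set \<Rightarrow> ('a \<times> 'a \<Rightarrow> 'c) \<Rightarrow> 'a list \<Rightarrow> nat" where
  "H_length_open AH rho xs = card (obstr_open AH rho xs) + 1"

definition obstr_closed :: "('c \<times> 'c) set \<Rightarrow> ('a \<times> 'a \<Rightarrow> 'c) \<Rightarrow> 'a list \<Rightarrow> nat set" where
  "obstr_closed AH rho xs = {i. i < length xs \<and>
     (rho (xs ! ((i + length xs - 1) mod length xs), xs ! i),
      rho (xs ! i, xs ! ((i + 1) mod length xs))) \<notin> AH}"

definition H_length_closed :: "('c \<times> 'c) set \<Rightarrow> ('a \<times> 'a \<Rightarrow> 'c) \<Rightarrow> 'a list \<Rightarrow> nat" where
  "H_length_closed AH rho xs = card (obstr_closed AH rho xs)"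

definition kH_kernel ::
  "'a set \<Rightarrow> ('a \<times> 'a) set \<Rightarrow> ('c \<times> 'c) set \<Rightarrow> ('a \<times> 'a \<Rightarrow> 'c) \<Rightarrow> nat \<Rightarrow> 'a set \<Rightarrow> bool" where
  "kH_kernel V A AH rho k S \<longleftrightarrow> S \<subseteq> V \<and>
     (\<forall>u\<in>S. \<forall>v\<in>S. u \<noteq> v \<longrightarrow>
        (\<forall>xs. dpath V A xs \<and> hd xs = u \<and> last xs = v \<longrightarrow> H_length_open AH rho xs \<ge> k)) \<and>
     (\<forall>x\<in>V - S. \<exists>xs. dpath V A xs \<and> hd xs = x \<and> last xs \<in> S \<and>
        H_length_open AH rho xs \<le> k - 1)"

end

theory Submission imports Defs begin

lemma dpath_Nil[simp]: "\<not> dpath V A []"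
  by (simp add: dpath_def)

lemma dpath_single[simp]: "dpath V A [x] \<longleftrightarrow> x \<in> V"
  by (simp add: dpath_def)

lemma dpath_Cons:
  assumes "ys \<noteq> []"
  shows "dpath V A (x # ys) \<longleftrightarrow> x \<in> V \<and> x \<notin> set ys \<and> (x, hd ys) \<in> A \<and> dpath V A ys"
proof
  assume d: "dpath V A (x # ys)"
  have "\<forall>i. Suc i < length ys \<longrightarrow> (ys ! i, ys ! Suc i) \<in> A"
  proof (intro allI impI)
    fix i assume "Suc i < length ys"
    then have "Suc (Suc i) < length (x#ys)" by simp
    then show "(ys ! i, ys ! Suc i) \<in> A" using d unfolding dpath_def
      by (metis nth_Cons_Suc)
  qed
  moreover have "(x, hd ys) \<in> A" using d assms unfolding dpath_def
    by (metis hd_conv_nth length_Cons length_greater_0_conv nth_Cons_0 nth_Cons_Suc Suc_less_eq)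
  ultimately show "x \<in> V \<and> x \<notin> set ys \<and> (x, hd ys) \<in> A \<and> dpath V A ys"
    using d assms unfolding dpath_def by auto
next
  assume r: "x \<in> V \<and> x \<notin> set ys \<and> (x, hd ys) \<in> A \<and> dpath V A ys"
  have "(\<forall>i. Suc i < length (x#ys) \<longrightarrow> ((x#ys) ! i, (x#ys) ! Suc i) \<in> A)"
  proof (intro allI impI)
    fix i assume i: "Suc i < length (x#ys)"
    show "((x#ys) ! i, (x#ys) ! Suc i) \<in> A"
    proof (cases i)
      case 0 then show ?thesis using r assms by (simp add: hd_conv_nth)
    next
      case (Suc j) then show ?thesis using r i unfolding dpath_def by auto
    qed
  qed
  then show "dpath V A (x # ys)" using r unfolding dpath_def by auto
qed

lemma dpath_append:
  assumes "xs \<noteq> []" "ys \<noteq> []"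
  shows "dpath V A (xs @ ys) \<longleftrightarrow> dpath V A xs \<and> dpath V A ys \<and> set xs \<inter> set ys = {} \<and> (last xs, hd ys) \<in> A"
  using assms(1)
proof (induction xs)
  case Nil then show ?case by simp
next
  case (Cons a xs)
  show ?case
  proof (cases "xs = []")
    case True then show ?thesis using assms(2) by (auto simp add: dpath_Cons)
  next
    case False
    then show ?thesis using Cons.IH assms(2) by (auto simp add: dpath_Cons)
  qed
qed

lemma dcycle_alt: "dcycle V A xs \<longleftrightarrow> length xs \<ge> 2 \<and> dpath V A xs \<and> (last xs, hd xs) \<in> A"
proof
  assume d: "dcycle V A xs"
  then have l: "length xs \<ge> 2" by (simp add: dcycle_def)
  have "\<forall>i. Suc i < length xs \<longrightarrow> (xs ! i, xs ! Suc i) \<in> A"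
  proof (intro allI impI)
    fix i assume "Suc i < length xs"
    then show "(xs ! i, xs ! Suc i) \<in> A" using d unfolding dcycle_def
      by (metis Suc_eq_plus1 Suc_lessD mod_less)
  qed
  moreover have "(last xs, hd xs) \<in> A"
  proof -
    have "length xs - 1 < length xs" using l by simp
    then have "(xs ! (length xs - 1), xs ! ((length xs - 1 + 1) mod length xs)) \<in> A"
      using d unfolding dcycle_def by blast
    moreover have e: "length xs - 1 + 1 = length xs" using l by simp
    moreover have "(length xs - 1 + 1) mod length xs = 0" unfolding e by simp
    moreover have "xs \<noteq> []" using l by auto
    ultimately show ?thesis by (simp add: last_conv_nth hd_conv_nth)
  qed
  ultimately show "length xs \<ge> 2 \<and> dpath V A xs \<and> (last xs, hd xs) \<in> A"
    using d l unfolding dcycle_def dpath_def by auto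
next
  assume r: "length xs \<ge> 2 \<and> dpath V A xs \<and> (last xs, hd xs) \<in> A"
  have "\<forall>i<length xs. (xs ! i, xs ! ((i + 1) mod length xs)) \<in> A"
  proof (intro allI impI)
    fix i assume i: "i < length xs"
    show "(xs ! i, xs ! ((i + 1) mod length xs)) \<in> A"
    proof (cases "Suc i < length xs")
      case True then show ?thesis using r unfolding dpath_def by simp
    next
      case False
      then have ii: "Suc i = length xs" using i by simp
      have "i = length xs - 1" using ii by linarith
      moreover have "(i+1) mod length xs = 0" using ii by (metis Suc_eq_plus1 mod_self)
      moreover have "xs \<noteq> []" using i by auto
      ultimately have "xs ! i = last xs" "xs ! ((i + 1) mod length xs) = hd xs"
        by (simp_all add: last_conv_nth hd_conv_nth)
      then show ?thesis using r by simp
    qed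
  qed
  then show "dcycle V A xs" using r unfolding dcycle_def dpath_def by auto
qed

lemma dcycle_rotate1:
  assumes "dcycle V A xs" shows "dcycle V A (rotate1 xs)"
proof -
  obtain a t where xs: "xs = a # t" and t: "t \<noteq> []" using assms unfolding dcycle_def
    by (metis Suc_le_length_iff length_0_conv numeral_2_eq_2 le_Suc_eq list.size(3) not_less_eq_eq)
  have d: "dpath V A (a # t)" and w: "(last (a#t), hd (a#t)) \<in> A" and l: "length (a#t) \<ge> 2"
    using assms xs by (auto simp: dcycle_alt)
  then have "a \<in> V" "a \<notin> set t" "(a, hd t) \<in> A" "dpath V A t" using t by (auto simp: dpath_Cons)
  moreover have "(last t, a) \<in> A" using w t by simp
  ultimately have "dpath V A (t @ [a])" using t by (simp add: dpath_append)
  moreover have "(last (t @ [a]), hd (t @ [a])) \<in> A" using \<open>(a, hd t) \<in> A\<close> t by simp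
  ultimately show ?thesis using l xs by (simp add: dcycle_alt)
qed

lemma dcycle_rotate:
  assumes "dcycle V A xs" shows "dcycle V A (rotate n xs)"
  by (induction n) (auto simp: assms dcycle_rotate1)

lemma dcycle_nonempty: "dcycle V A xs \<Longrightarrow> xs \<noteq> []"
  by (auto simp: dcycle_def)

lemma dcycle_rotate_to:
  assumes "dcycle V A xs" "v \<in> set xs"
  shows "\<exists>ys. dcycle V A ys \<and> set ys = set xs \<and> hd ys = v"
proof -
  obtain i where i: "i < length xs" "xs ! i = v" using assms(2) by (metis in_set_conv_nth)
  have "hd (rotate i xs) = v" using i dcycle_nonempty[OF assms(1)] by (simp add: hd_rotate_conv_nth)
  then show ?thesis using dcycle_rotate[OF assms(1)] by (metis set_rotate)
qed

lemma dcycle_rotate_arc: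
  assumes "dcycle V A xs" "i < length xs"
  shows "\<exists>ys. dcycle V A ys \<and> set ys = set xs \<and> last ys = xs ! i \<and> hd ys = xs ! (Suc i mod length xs)"
proof -
  have ne: "xs \<noteq> []" using dcycle_nonempty[OF assms(1)] .
  have "hd (rotate i xs) = xs ! i" using ne assms(2) by (simp add: hd_rotate_conv_nth)
  moreover have "rotate i xs \<noteq> []" using ne by simp
  ultimately have "last (rotate (Suc i) xs) = xs ! i"
    by (metis rotate_Suc list.collapse rotate1.simps(2) last_snoc)
  moreover have "hd (rotate (Suc i) xs) = xs ! (Suc i mod length xs)" using ne hd_rotate_conv_nth[OF ne, of "Suc i"] by blast
  ultimately show ?thesis using dcycle_rotate[OF assms(1)] by (metis set_rotate)
qed


lemma dpath_rtrancl: "dpath V A ps \<Longrightarrow> (hd ps, last ps) \<in> A\<^sup>*"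
proof (induction ps)
  case Nil then show ?case by simp
next
  case (Cons a t)
  show ?case
  proof (cases "t = []")
    case True then show ?thesis by simp
  next
    case False
    then have "(a, hd t) \<in> A" "dpath V A t" using Cons.prems by (auto simp: dpath_Cons)
    then show ?thesis using Cons.IH False by auto
  qed
qed

lemma first_hit:
  assumes "(u,v) \<in> A\<^sup>*" "v \<in> S" "S \<subseteq> V" "A \<subseteq> V \<times> V" "u \<in> V"
  shows "\<exists>ps. dpath V A ps \<and> hd ps = u \<and> last ps \<in> S \<and> (\<forall>z\<in>set (butlast ps). z \<notin> S)"
  using assms(1,5)
proof (induction rule: converse_rtrancl_induct)
  case base
  then show ?case using assms(2) by (intro exI[of _ "[v]"]) auto
next
  case (step y z)
  have "z \<in> V" using step.hyps(1) assms(4) by auto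
  then obtain ps where ps: "dpath V A ps" "hd ps = z" "last ps \<in> S" "\<forall>z\<in>set (butlast ps). z \<notin> S"
    using step.IH by blast
  have ne: "ps \<noteq> []" using ps by auto
  show ?case
  proof (cases "y \<in> S")
    case True then show ?thesis using step.prems by (intro exI[of _ "[y]"]) auto
  next
    case yS: False
    show ?thesis
    proof (cases "y \<in> set ps")
      case True
      then obtain as bs where sp: "ps = as @ y # bs" by (metis split_list)
      have d: "dpath V A (y # bs)"
      proof (cases "as = []")
        case True then show ?thesis using sp ps by simp
      next
        case False then show ?thesis using sp ps dpath_append[of as "y#bs" V A] by simp
      qed
      have "last (y # bs) = last ps" using sp by simp
      moreover have "set (butlast (y # bs)) \<subseteq> set (butlast ps)" using sp
        by (auto simp: butlast_append)
      ultimately show ?thesis using d ps by (intro exI[of _ "y # bs"]) auto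
    next
      case False
      have "dpath V A (y # ps)" using False ps ne step.prems step.hyps(1) by (simp add: dpath_Cons)
      moreover have "butlast (y # ps) = y # butlast ps" using ne by simp
      ultimately show ?thesis using ps ne yS by (intro exI[of _ "y # ps"]) auto
    qed
  qed
qed

lemma exit_arc:
  assumes "(a,b) \<in> A\<^sup>*" "a \<in> S" "b \<notin> S"
  shows "\<exists>c p. c \<in> S \<and> p \<notin> S \<and> (c,p) \<in> A \<and> (p,b) \<in> A\<^sup>*"
  using assms
proof (induction rule: converse_rtrancl_induct)
  case base then show ?case by simp
next
  case (step y z)
  show ?case
  proof (cases "z \<in> S")
    case True then show ?thesis using step by blast
  next
    case False then show ?thesis using step by blast
  qed
qed

lemma lt_facts:
  assumes "local_tournament V A"
  shows "finite V" "A \<subseteq> V \<times> V" "\<And>x. (x,x) \<notin> A"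
    "\<And>x u w. x \<in> V \<Longrightarrow> (x,u) \<in> A \<Longrightarrow> (x,w) \<in> A \<Longrightarrow> u \<noteq> w \<Longrightarrow> (u,w) \<in> A \<longleftrightarrow> (w,u) \<notin> A"
  using assms unfolding local_tournament_def digraph_def loopless_def is_tournament_on_def out_nbhd_def
  by blast+

lemma extend:
  assumes lt: "local_tournament V A" and cyc: "dcycle V A cs"
    and p: "p \<notin> set cs" and c: "c \<in> set cs" "(c,p) \<in> A" and d: "(p,d) \<in> A\<^sup>*" "d \<in> set cs"
  shows "\<exists>cs'. dcycle V A cs' \<and> set cs \<subseteq> set cs' \<and> p \<in> set cs'"
proof -
  note F = lt_facts[OF lt]
  have pV: "p \<in> V" using c F(2) by auto
  have csV: "set cs \<subseteq> V" using cyc by (simp add: dcycle_def)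
  show ?thesis
  proof (cases "\<exists>i<length cs. (cs!i,p) \<in> A \<and> (p, cs!(Suc i mod length cs)) \<in> A")
    case True
    then obtain i where i: "i < length cs" "(cs!i,p) \<in> A" "(p, cs!(Suc i mod length cs)) \<in> A" by blast
    obtain ys where ys: "dcycle V A ys" "set ys = set cs" "last ys = cs ! i" "hd ys = cs ! (Suc i mod length cs)"
      using dcycle_rotate_arc[OF cyc i(1)] by blast
    have yne: "ys \<noteq> []" using dcycle_nonempty[OF ys(1)] .
    have "dpath V A (ys @ [p])" using ys yne pV p i by (simp add: dpath_append dcycle_alt)
    moreover have "length (ys @ [p]) \<ge> 2" using ys(1) by (simp add: dcycle_def)
    moreover have "(last (ys @ [p]), hd (ys @ [p])) \<in> A" using yne ys i by simp
    ultimately have "dcycle V A (ys @ [p])" by (simp add: dcycle_alt)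
    then show ?thesis using ys by (intro exI[of _ "ys @ [p]"]) auto
  next
    case False
    define n where "n = length cs"
    have npos: "n > 0" using cyc unfolding dcycle_def n_def by linarith
    have "\<exists>i<length cs. cs ! i = c" using c(1) by (simp add: in_set_conv_nth)
    then obtain i0 where i0: "i0 < n" "cs ! i0 = c" unfolding n_def by blast
    have all: "(cs ! ((i0 + t) mod n), p) \<in> A" for t
    proof (induction t)
      case 0 then show ?case using i0 c by simp
    next
      case (Suc t)
      define j where "j = (i0 + t) mod n"
      have j: "j < n" using npos by (simp add: j_def)
      have arc: "(cs ! j, cs ! (Suc j mod n)) \<in> A" using cyc j by (simp add: dcycle_def n_def)
      have eq: "Suc j mod n = (i0 + Suc t) mod n" unfolding j_def by (simp add: mod_Suc_eq)
      have h: "(cs ! j, p) \<in> A" using Suc j_def by simp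
      have nA: "\<forall>i<n. \<not> ((cs!i,p) \<in> A \<and> (p, cs!(Suc i mod n)) \<in> A)" using False unfolding n_def by simp
      have n1: "(p, cs ! (Suc j mod n)) \<notin> A" using nA j h by simp
      have n2: "cs ! j \<in> V" using csV j unfolding n_def by auto
      have "Suc j mod n < length cs" using npos unfolding n_def by simp
      then have "cs ! (Suc j mod n) \<in> set cs" by (rule nth_mem)
      then have n3: "p \<noteq> cs ! (Suc j mod n)" using p by blast
      have "(p, cs ! (Suc j mod n)) \<in> A \<longleftrightarrow> (cs ! (Suc j mod n), p) \<notin> A"
        by (rule F(4)[OF n2 h arc n3])
      then have "(cs ! (Suc j mod n), p) \<in> A" using n1 by blast
      then show ?case using eq by simp
    qed
    have allC: "(z, p) \<in> A" if "z \<in> set cs" for z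
    proof -
      have "\<exists>i<length cs. cs ! i = z" using that by (simp add: in_set_conv_nth)
      then obtain j where j: "j < n" "cs ! j = z" unfolding n_def by blast
      have "(i0 + (n - i0 + j)) mod n = j" using i0 j by simp
      then show ?thesis using all[of "n - i0 + j"] j by simp
    qed
    obtain qs where qs: "dpath V A qs" "hd qs = p" "last qs \<in> set cs" "\<forall>z\<in>set (butlast qs). z \<notin> set cs"
      using first_hit[OF d(1) d(2) csV F(2) pV] by blast
    have qne: "qs \<noteq> []" using qs by auto
    define bq where "bq = butlast qs"
    define c' where "c' = last qs"
    have qsplit: "qs = bq @ [c']" using qne by (simp add: bq_def c'_def)
    have bne: "bq \<noteq> []"
    proof
      assume "bq = []"
      then have "qs = [c']" using qsplit by simp
      then show False using qs p by simp
    qed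
    have hb: "hd bq = p" using qs qsplit bne by simp
    have dq: "dpath V A bq" "(last bq, c') \<in> A" using qs(1) qsplit bne dpath_append[of bq "[c']" V A] by auto
    have dis: "set bq \<inter> set cs = {}" using qs(4) bq_def by auto
    obtain ys where ys: "dcycle V A ys" "set ys = set cs" "hd ys = c'"
      using dcycle_rotate_to[OF cyc] qs(3) c'_def by blast
    have yne: "ys \<noteq> []" using dcycle_nonempty[OF ys(1)] .
    have "last ys \<in> set cs" using ys(2) yne last_in_set by blast
    then have "(last ys, p) \<in> A" using allC by blast
    then have "dpath V A (ys @ bq)" using ys yne bne dq dis hb by (auto simp: dpath_append dcycle_alt)
    moreover have "length (ys @ bq) \<ge> 2" using ys(1) by (simp add: dcycle_def)
    moreover have "(last (ys @ bq), hd (ys @ bq)) \<in> A" using yne bne ys dq by simp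
    ultimately have "dcycle V A (ys @ bq)" by (simp add: dcycle_alt)
    moreover have "p \<in> set bq" using hb bne list.set_sel(1) by blast
    ultimately show ?thesis using ys by (intro exI[of _ "ys @ bq"]) auto
  qed
qed

lemma common_cycle:
  assumes lt: "local_tournament V A" and xy: "x \<in> V" "y \<in> V" "x \<noteq> y" "(x,y) \<in> A\<^sup>*" "(y,x) \<in> A\<^sup>*"
  shows "\<exists>cs. dcycle V A cs \<and> x \<in> set cs \<and> y \<in> set cs"
proof -
  note F = lt_facts[OF lt]
  have "(x,y) \<in> A\<^sup>+" using xy by (simp add: rtrancl_eq_or_trancl)
  then obtain w where w: "(x,w) \<in> A" "(w,y) \<in> A\<^sup>*" by (auto dest: tranclD)
  have wx: "(w,x) \<in> A\<^sup>*" using w(2) xy(5) by simp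
  have wV: "w \<in> V" using w(1) F(2) by auto
  obtain ps where ps: "dpath V A ps" "hd ps = w" "last ps \<in> {x}"
    using first_hit[OF wx _ _ F(2) wV, of "{x}"] xy(1) by blast
  have "w \<noteq> x" using w(1) F(3) by auto
  have "length ps \<ge> 2"
  proof (rule ccontr)
    assume "\<not> length ps \<ge> 2"
    moreover have "ps \<noteq> []" using ps(1) by (auto simp: dpath_def)
    ultimately have "length ps = 1" by (cases ps) (auto simp: not_less_eq_eq)
    then have "hd ps = last ps" using \<open>ps \<noteq> []\<close> by (simp add: hd_conv_nth last_conv_nth)
    then show False using ps \<open>w \<noteq> x\<close> by simp
  qed
  then have cyc0: "dcycle V A ps" using ps w(1) by (simp add: dcycle_alt)
  have "ps \<noteq> []" using ps(1) by (auto simp: dpath_def)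
  then have x0: "x \<in> set ps" using ps(3) last_in_set[of ps] by simp
  have main: "\<forall>cs. card (V - set cs) = m \<longrightarrow> dcycle V A cs \<longrightarrow> x \<in> set cs \<longrightarrow>
      (\<exists>cs'. dcycle V A cs' \<and> x \<in> set cs' \<and> y \<in> set cs')" for m
  proof (induction m rule: less_induct)
    case (less m)
    show ?case
    proof (intro allI impI)
      fix cs assume m: "card (V - set cs) = m" and cyc: "dcycle V A cs" and xc: "x \<in> set cs"
      show "\<exists>cs'. dcycle V A cs' \<and> x \<in> set cs' \<and> y \<in> set cs'"
      proof (cases "y \<in> set cs")
        case True then show ?thesis using cyc xc by blast
      next
        case False
        obtain c p where cp: "c \<in> set cs" "p \<notin> set cs" "(c,p) \<in> A" "(p,y) \<in> A\<^sup>*"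
          using exit_arc[OF xy(4) xc False] by blast
        have "(p,x) \<in> A\<^sup>*" using cp(4) xy(5) by simp
        then obtain cs' where cs': "dcycle V A cs'" "set cs \<subseteq> set cs'" "p \<in> set cs'"
          using extend[OF lt cyc cp(2) cp(1) cp(3) _ xc] by blast
        have pV: "p \<in> V" using cp(3) F(2) by auto
        have "set cs' \<subseteq> V" using cs'(1) by (simp add: dcycle_def)
        have "V - set cs' \<subseteq> V - set cs" using cs'(2) by blast
        moreover have "p \<in> V - set cs" "p \<notin> V - set cs'" using pV cp(2) cs'(3) by simp_all
        ultimately have "V - set cs' \<subset> V - set cs" by blast
        then have "card (V - set cs') < card (V - set cs)"
          using F(1) by (simp add: psubset_card_mono)
        then have "card (V - set cs') < m" using m by simp
        moreover have "x \<in> set cs'" using cs'(2) xc by blast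
        ultimately show ?thesis using less.IH[of "card (V - set cs')"] cs'(1) by blast
      qed
    qed
  qed
  then show ?thesis using cyc0 x0 by blast
qed

lemma dpath_take:
  assumes "dpath V A xs" "0 < m"
  shows "dpath V A (take m xs)"
proof (cases "drop m xs = []")
  case True then show ?thesis using assms by simp
next
  case False
  have "xs \<noteq> []" using assms(1) by (auto simp: dpath_def)
  then have "take m xs \<noteq> []" using assms(2) by simp
  then show ?thesis using assms(1) dpath_append[of "take m xs" "drop m xs" V A] False by simp
qed

lemma path_from_cycle:
  assumes cyc: "dcycle V A cs" and xy: "x \<in> set cs" "y \<in> set cs" "x \<noteq> y"
    and bound: "\<forall>xs. dcycle V A xs \<longrightarrow> H_length_closed AH rho xs \<le> k - 2" and k: "k \<ge> 2"
  shows "\<exists>ps. dpath V A ps \<and> hd ps = x \<and> last ps = y \<and> H_length_open AH rho ps \<le> k - 1"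
proof -
  obtain ys where ys: "dcycle V A ys" "set ys = set cs" "hd ys = x"
    using dcycle_rotate_to[OF cyc xy(1)] by blast
  define n where "n = length ys"
  have yne: "ys \<noteq> []" using dcycle_nonempty[OF ys(1)] .
  have "y \<in> set ys" using xy(2) ys(2) by simp
  then have "\<exists>i<length ys. ys ! i = y" by (simp add: in_set_conv_nth)
  then obtain j where j: "j < n" "ys ! j = y" unfolding n_def by blast
  have "hd ys = ys ! 0" using yne by (simp add: hd_conv_nth)
  then have j0: "j \<noteq> 0" using j(2) ys(3) xy(3) by (cases j) auto
  define ps where "ps = take (Suc j) ys"
  have dp: "dpath V A ps" unfolding ps_def using ys(1) by (simp add: dpath_take dcycle_alt)
  have lps: "length ps = Suc j" using j unfolding ps_def n_def by simp
  have hps: "hd ps = x" using ys(3) yne unfolding ps_def by (simp add: hd_take)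
  have "ps \<noteq> []" using lps by auto
  then have "last ps = ps ! j" using lps by (simp add: last_conv_nth)
  also have "ps ! j = ys ! j" unfolding ps_def by simp
  finally have lastps: "last ps = y" using j by simp
  have sub: "obstr_open AH rho ps \<subseteq> obstr_closed AH rho ys"
  proof
    fix t assume "t \<in> obstr_open AH rho ps"
    then have t: "1 \<le> t" "Suc t < length ps"
      "(rho (ps ! (t - 1), ps ! t), rho (ps ! t, ps ! Suc t)) \<notin> AH"
      unfolding obstr_open_def by auto
    have tj: "Suc t \<le> j" using t lps by simp
    have e1: "ps ! (t - 1) = ys ! (t - 1)" "ps ! t = ys ! t" "ps ! Suc t = ys ! Suc t"
      using tj unfolding ps_def by simp_all
    have m1: "(t + n - 1) mod n = t - 1" using t(1) tj j
    proof -
      have e: "t + n - 1 = (t - 1) + n" using t(1) by simp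
      have "t - 1 < n" using tj j by simp
      then have h2: "((t - 1) + n) mod n = t - 1" by simp
      show ?thesis using e h2 by (simp only:)
    qed
    have m2: "(t + 1) mod n = Suc t" using tj j by simp
    have tl: "t < length ys" using tj j unfolding n_def by simp
    have m1': "(t + length ys - 1) mod length ys = t - 1" using m1 unfolding n_def .
    have m2': "(t + 1) mod length ys = Suc t" using m2 unfolding n_def .
    have "(rho (ys ! (t - 1), ys ! t), rho (ys ! t, ys ! Suc t)) \<notin> AH" using t(3) e1 by simp
    then have "(rho (ys ! ((t + length ys - 1) mod length ys), ys ! t),
      rho (ys ! t, ys ! ((t + 1) mod length ys))) \<notin> AH" unfolding m1' m2' .
    then show "t \<in> obstr_closed AH rho ys"
      unfolding obstr_closed_def using tl by blast
  qed
  have "finite (obstr_closed AH rho ys)" unfolding obstr_closed_def by simp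
  then have "card (obstr_open AH rho ps) \<le> card (obstr_closed AH rho ys)" using sub by (rule card_mono)
  moreover have "H_length_closed AH rho ys \<le> k - 2" using bound ys(1) by blast
  ultimately have "H_length_open AH rho ps \<le> k - 1"
    unfolding H_length_open_def H_length_closed_def using k by linarith
  then show ?thesis using dp hps lastps by blast
qed

lemma kernel_exists:
  fixes R :: "'a \<Rightarrow> 'a \<Rightarrow> bool"
  assumes fin: "finite W0"
    and asym: "\<And>x y. x \<in> W0 \<Longrightarrow> y \<in> W0 \<Longrightarrow> R x y \<Longrightarrow> \<not> R y x \<Longrightarrow> (x,y) \<in> T\<^sup>* \<and> (y,x) \<notin> T\<^sup>*"
  shows "\<exists>S \<subseteq> W0. (\<forall>u\<in>S. \<forall>v\<in>S. u \<noteq> v \<longrightarrow> \<not> R u v) \<and> (\<forall>x\<in>W0 - S. \<exists>s\<in>S. R x s)"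
proof (rule finite_remove_induct[OF fin, where P = "\<lambda>X. \<exists>S \<subseteq> X. (\<forall>u\<in>S. \<forall>v\<in>S. u \<noteq> v \<longrightarrow> \<not> R u v) \<and> (\<forall>x\<in>X - S. \<exists>s\<in>S. R x s)"])
  show "\<exists>S \<subseteq> {}. (\<forall>u\<in>S. \<forall>v\<in>S. u \<noteq> v \<longrightarrow> \<not> R u v) \<and> (\<forall>x\<in>{} - S. \<exists>s\<in>S. R x s)" by simp
next
  fix W assume finW: "finite W" and ne: "W \<noteq> {}" and sub: "W \<subseteq> W0"
    and IH: "\<And>x. x \<in> W \<Longrightarrow> \<exists>S \<subseteq> W - {x}. (\<forall>u\<in>S. \<forall>v\<in>S. u \<noteq> v \<longrightarrow> \<not> R u v) \<and> (\<forall>x'\<in>(W - {x}) - S. \<exists>s\<in>S. R x' s)"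
  define f where "f w = card {w' \<in> W. (w, w') \<in> T\<^sup>*}" for w
  have fin2: "finite (f ` W)" using finW by simp
  have "f ` W \<noteq> {}" using ne by simp
  then have "Max (f ` W) \<in> f ` W" using fin2 by (rule Max_in[rotated])
  then obtain u where u: "u \<in> W" "f u = Max (f ` W)" by auto
  have umax: "f w \<le> f u" if "w \<in> W" for w
  proof -
    have "f w \<le> Max (f ` W)" using fin2 that by (simp add: Max_ge)
    then show ?thesis using u(2) by simp
  qed
  have nomax: "\<not> ((w,u) \<in> T\<^sup>* \<and> (u,w) \<notin> T\<^sup>*)" if w: "w \<in> W" for w
  proof
    assume a: "(w,u) \<in> T\<^sup>* \<and> (u,w) \<notin> T\<^sup>*"
    have "{w' \<in> W. (u, w') \<in> T\<^sup>*} \<subset> {w' \<in> W. (w, w') \<in> T\<^sup>*}"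
    proof
      show "{w' \<in> W. (u, w') \<in> T\<^sup>*} \<subseteq> {w' \<in> W. (w, w') \<in> T\<^sup>*}"
        using a rtrancl_trans[of w u T] by blast
      have "w \<in> {w' \<in> W. (w, w') \<in> T\<^sup>*}" using w by simp
      moreover have "w \<notin> {w' \<in> W. (u, w') \<in> T\<^sup>*}" using a by simp
      ultimately show "{w' \<in> W. (u, w') \<in> T\<^sup>*} \<noteq> {w' \<in> W. (w, w') \<in> T\<^sup>*}" by blast
    qed
    then have "f u < f w" unfolding f_def using finW by (simp add: psubset_card_mono)
    then show False using umax[OF w] by simp
  qed
  obtain S' where S'1: "S' \<subseteq> W - {u}" and S'2: "\<forall>a\<in>S'. \<forall>b\<in>S'. a \<noteq> b \<longrightarrow> \<not> R a b"
    and S'3: "\<forall>x\<in>(W - {u}) - S'. \<exists>s\<in>S'. R x s"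
    using IH[OF u(1)] by blast
  show "\<exists>S \<subseteq> W. (\<forall>u\<in>S. \<forall>v\<in>S. u \<noteq> v \<longrightarrow> \<not> R u v) \<and> (\<forall>x\<in>W - S. \<exists>s\<in>S. R x s)"
  proof (cases "\<exists>s\<in>S'. R u s \<or> R s u")
    case True
    then obtain s where s1: "s \<in> S'" and s2: "R u s \<or> R s u" by blast
    have sW: "s \<in> W" using s1 S'1 by blast
    have "R u s"
    proof (rule ccontr)
      assume nus: "\<not> R u s"
      then have "R s u" using s2 by simp
      moreover have "s \<in> W0" "u \<in> W0" using sW u(1) sub by auto
      ultimately have "(s,u) \<in> T\<^sup>* \<and> (u,s) \<notin> T\<^sup>*" using asym nus by blast
      then show False using nomax[OF sW] by simp
    qed
    have j1: "S' \<subseteq> W" using S'1 by blast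
    have j3: "\<forall>x\<in>W - S'. \<exists>s\<in>S'. R x s"
    proof
      fix x assume x: "x \<in> W - S'"
      show "\<exists>s\<in>S'. R x s"
      proof (cases "x = u")
        case True then have "R x s" using \<open>R u s\<close> by simp
        then show ?thesis using s1 by blast
      next
        case False
        then have "x \<in> (W - {u}) - S'" using x by simp
        then show ?thesis using S'3 by blast
      qed
    qed
    show ?thesis by (intro exI[of _ S'] conjI j1 S'2 j3)
  next
    case False
    have i1: "insert u S' \<subseteq> W" using S'1 u(1) by blast
    have i2: "\<forall>a\<in>insert u S'. \<forall>b\<in>insert u S'. a \<noteq> b \<longrightarrow> \<not> R a b"
    proof (intro ballI impI)
      fix a b assume a: "a \<in> insert u S'" and b: "b \<in> insert u S'" and ab: "a \<noteq> b"
      show "\<not> R a b"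
      proof (cases "a = u")
        case True
        then have "b \<in> S'" using b ab by simp
        then show ?thesis using False True by simp
      next
        case au: False
        then have aS: "a \<in> S'" using a by simp
        show ?thesis
        proof (cases "b = u")
          case True then show ?thesis using False aS by simp
        next
          case False then have "b \<in> S'" using b by simp
          then show ?thesis using S'2 aS ab by simp
        qed
      qed
    qed
    have i3: "\<forall>x\<in>W - insert u S'. \<exists>s\<in>insert u S'. R x s"
    proof
      fix x assume x: "x \<in> W - insert u S'"
      then have "x \<in> (W - {u}) - S'" by simp
      then have "\<exists>s\<in>S'. R x s" using S'3 by blast
      then show "\<exists>s\<in>insert u S'. R x s" by simp
    qed
    show ?thesis by (intro exI[of _ "insert u S'"] conjI i1 i2 i3)
  qed
qed

theorem corollary29:
  fixes V :: "'a set" and A :: "('a \<times> 'a) set"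
    and VH :: "'c set" and AH :: "('c \<times> 'c) set"
    and rho :: "'a \<times> 'a \<Rightarrow> 'c" and k :: nat
  assumes "k \<ge> 2"
    and "local_tournament V A"
    and "H_colored A VH AH rho"
    and "\<forall>xs. dcycle V A xs \<longrightarrow> H_length_closed AH rho xs \<le> k - 2"
  shows "\<exists>S. kH_kernel V A AH rho k S"
proof -
  note F = lt_facts[OF assms(2)]
  define R where "R x y \<longleftrightarrow> x \<noteq> y \<and> (\<exists>ps. dpath V A ps \<and> hd ps = x \<and> last ps = y \<and> H_length_open AH rho ps \<le> k - 1)" for x y
  have asym: "(x,y) \<in> A\<^sup>* \<and> (y,x) \<notin> A\<^sup>*" if xy: "x \<in> V" "y \<in> V" "R x y" "\<not> R y x" for x y
  proof -
    obtain ps where ps: "x \<noteq> y" "dpath V A ps" "hd ps = x" "last ps = y" using xy(3) unfolding R_def by blast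
    have r: "(x,y) \<in> A\<^sup>*" using dpath_rtrancl[OF ps(2)] ps by simp
    have "(y,x) \<notin> A\<^sup>*"
    proof
      assume "(y,x) \<in> A\<^sup>*"
      then obtain cs where "dcycle V A cs" "y \<in> set cs" "x \<in> set cs"
        using common_cycle[OF assms(2) xy(2) xy(1) _ _ r] ps(1) by metis
      then obtain qs where "dpath V A qs" "hd qs = y" "last qs = x" "H_length_open AH rho qs \<le> k - 1"
        using path_from_cycle[OF _ _ _ _ assms(4) assms(1)] ps(1) by metis
      then have "R y x" unfolding R_def using ps(1) by blast
      then show False using xy(4) by blast
    qed
    then show ?thesis using r by blast
  qed
  obtain S where S: "S \<subseteq> V" "\<forall>u\<in>S. \<forall>v\<in>S. u \<noteq> v \<longrightarrow> \<not> R u v" "\<forall>x\<in>V - S. \<exists>s\<in>S. R x s"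
    using kernel_exists[of V R A, OF F(1)] asym by blast
  have "kH_kernel V A AH rho k S"
    unfolding kH_kernel_def
  proof (intro conjI ballI allI impI)
    show "S \<subseteq> V" by (rule S(1))
  next
    fix u v xs assume uv: "u \<in> S" "v \<in> S" "u \<noteq> v" and p: "dpath V A xs \<and> hd xs = u \<and> last xs = v"
    show "k \<le> H_length_open AH rho xs"
    proof (rule ccontr)
      assume "\<not> k \<le> H_length_open AH rho xs"
      then have "H_length_open AH rho xs \<le> k - 1" by simp
      then have "R u v" unfolding R_def using uv p by blast
      then show False using S(2) uv by blast
    qed
  next
    fix x assume x: "x \<in> V - S"
    then obtain s where "s \<in> S" "R x s" using S(3) by blast
    then show "\<exists>xs. dpath V A xs \<and> hd xs = x \<and> last xs \<in> S \<and> H_length_open AH rho xs \<le> k - 1"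
      unfolding R_def by blast
  qed
  then show ?thesis by blast
qed

end
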